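(* Let $e>0$, $\beta>0$, $v>0$ and a sign $s\in\{+1,-1\}$. Define the winding-gauge configuration $\phi_w(\tau)=2v\,t_1\exp\!\big(s\tfrac{4\pi i}{\beta}t_3\tau\big)$ and $a^{w}_\mu=-s\,\delta_{\mu4}\frac{2\pi}{e\beta}t_3$, and the unitary-gauge configuration $\phi_u=2v\,t_3$, $a^u_\mu=0$. Then there exists a map $\tilde\Omega:[0,\beta]\to\mathrm{SU}(2)$, depending only on $\tau$, which is smooth except at a single point where it is discontinuous (singular), with $\tilde\Omega(0)=\tilde\Omega(\beta)$ (periodic), such that: (i) $\tilde\Omega(\tau)\phi_w(\tau)\tilde\Omega(\tau)^\dagger=\phi_u$ for all $\tau$; (ii) $\tilde\Omega a^w_\mu\tilde\Omega^\dagger+\frac ie\tilde\Omega\partial_\mu\tilde\Omega^\dagger=a^u_\mu$ at all $\tau$ away from the discontinuity; (iii) (admissibility) for every continuous $\mathfrak{su}(2)$-valued function $\delta a(\tau)$ on $[0,\beta]$ with $\delta a(0)=\delta a(\beta)$, the function $\tilde\Omega\,\delta a\,\tilde\Omega^\dagger$ is continuous on $[0,\beta]$ and takes equal values at $0$ and $\beta$. Under this gauge transformation the Polyakov loop changes from $P[a^w]=-\mathbb 1_2$ to $P[a^u]=\mathbb 1_2$.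
   Context: Gauge group SU(2), $t_a=\frac12\sigma_a$ (Pauli matrices). A gauge transformation by $\Omega$ acts as $\phi\to\Omega\phi\Omega^\dagger$, $a_\mu\to\Omega a_\mu\Omega^\dagger+\frac ie\Omega\partial_\mu\Omega^\dagger$, with $\partial_4=\partial_\tau$. For a $\tau$-independent temporal component $a_4$ proportional to $t_3$, the Polyakov loop is $P[a]=\exp\big(ie\int_0^\beta d\tau\,a_4\big)$ (no path ordering needed). *)

theory Defs
  imports "HOL-Analysis.Analysis"
begin

type_synonym cmat = "complex^2^2"

definition mat2 :: "complex \<Rightarrow> complex \<Rightarrow> complex \<Rightarrow> complex \<Rightarrow> cmat" where
  "mat2 a b c d = vector [vector [a, b], vector [c, d]]"

text \<open>Generators t_a = sigma_a / 2 (t_2 is listed for completeness).\<close>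
definition t1 :: cmat where "t1 = mat2 0 (1/2) (1/2) 0"
definition t2 :: cmat where "t2 = mat2 0 (-\<i>/2) (\<i>/2) 0"
definition t3 :: cmat where "t3 = mat2 (1/2) 0 0 (-1/2)"

definition csmul :: "complex \<Rightarrow> cmat \<Rightarrow> cmat" where
  "csmul c A = (\<chi> i j. c * A $ i $ j)"

definition dagger :: "cmat \<Rightarrow> cmat" where
  "dagger A = (\<chi> i j. cnj (A $ j $ i))"

fun mpow :: "cmat \<Rightarrow> nat \<Rightarrow> cmat" where
  "mpow A 0 = mat 1"
| "mpow A (Suc n) = A ** mpow A n"

definition mexp :: "cmat \<Rightarrow> cmat" where
  "mexp A = (\<Sum>n. (1 / fact n) *\<^sub>R mpow A n)"

text \<open>The group SU(2) and the Lie algebra su(2) (physics convention: Hermitian, traceless,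
  i.e. real combinations of the t_a).\<close>
definition SU2 :: "cmat set" where
  "SU2 = {U. U ** dagger U = mat 1 \<and> det U = 1}"

definition su2 :: "cmat set" where
  "su2 = {A. dagger A = A \<and> trace A = 0}"

definition smooth_on :: "real set \<Rightarrow> (real \<Rightarrow> cmat) \<Rightarrow> bool" where
  "smooth_on S f \<longleftrightarrow> (\<exists>D :: nat \<Rightarrow> real \<Rightarrow> cmat. D 0 = f \<and>
      (\<forall>n. \<forall>t\<in>S. (D n has_vector_derivative D (Suc n) t) (at t within S)))"

text \<open>Configurations (all depend only on tau; index mu ranges over 1..4, with mu = 4 the time
  direction).\<close>
definition phi_w :: "real \<Rightarrow> real \<Rightarrow> real \<Rightarrow> real \<Rightarrow> cmat" where
  "phi_w v s \<beta> \<tau> = csmul (of_real (2 * v))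
      (t1 ** mexp (csmul (of_real (s * 4 * pi / \<beta> * \<tau>) * \<i>) t3))"

definition a_w :: "real \<Rightarrow> real \<Rightarrow> real \<Rightarrow> nat \<Rightarrow> real \<Rightarrow> cmat" where
  "a_w e s \<beta> \<mu> \<tau> = (if \<mu> = 4 then csmul (of_real (- s * 2 * pi / (e * \<beta>))) t3 else 0)"

definition phi_u :: "real \<Rightarrow> cmat" where
  "phi_u v = csmul (of_real (2 * v)) t3"

definition a_u :: "nat \<Rightarrow> real \<Rightarrow> cmat" where
  "a_u \<mu> \<tau> = 0"

definition dmu :: "real \<Rightarrow> nat \<Rightarrow> (real \<Rightarrow> cmat) \<Rightarrow> real \<Rightarrow> cmat" where
  "dmu \<beta> \<mu> f \<tau> = (if \<mu> = 4 then vector_derivative f (at \<tau> within {0..\<beta>}) else 0)"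

definition gauge_a :: "real \<Rightarrow> real \<Rightarrow> (real \<Rightarrow> cmat) \<Rightarrow> (nat \<Rightarrow> real \<Rightarrow> cmat) \<Rightarrow> nat \<Rightarrow> real \<Rightarrow> cmat" where
  "gauge_a e \<beta> \<Omega> a \<mu> \<tau> =
     \<Omega> \<tau> ** a \<mu> \<tau> ** dagger (\<Omega> \<tau>)
     + csmul (\<i> / of_real e) (\<Omega> \<tau> ** dmu \<beta> \<mu> (\<lambda>t. dagger (\<Omega> t)) \<tau>)"

text \<open>Polyakov loop for a temporal component proportional to t_3 (no path ordering).\<close>
definition polyakov :: "real \<Rightarrow> real \<Rightarrow> (real \<Rightarrow> cmat) \<Rightarrow> cmat" where
  "polyakov e \<beta> a4 = mexp (csmul (\<i> * of_real e) (integral {0..\<beta>} a4))"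

end

theory Submission
  imports Defs
begin

lemma mat2_nth [simp]:
  "mat2 a b c d $ 1 $ 1 = a" "mat2 a b c d $ 1 $ 2 = b"
  "mat2 a b c d $ 2 $ 1 = c" "mat2 a b c d $ 2 $ 2 = d"
  by (simp_all add: mat2_def)

lemma cmat_eq: "(A::cmat) = mat2 (A$1$1) (A$1$2) (A$2$1) (A$2$2)"
  by (simp add: vec_eq_iff forall_2)

lemma mat2_eq_iff: "mat2 a b c d = mat2 a' b' c' d' \<longleftrightarrow> a = a' \<and> b = b' \<and> c = c' \<and> d = d'"
  by (metis mat2_nth)

lemma mat2_mult [simp]: "mat2 a b c d ** mat2 a' b' c' d' =
   mat2 (a*a' + b*c') (a*b' + b*d') (c*a' + d*c') (c*b'+d*d')"
  by (subst cmat_eq) (simp add: matrix_matrix_mult_def sum_2)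

lemma mat2_add [simp]: "mat2 a b c d + mat2 a' b' c' d' = mat2 (a+a') (b+b') (c+c') (d+d')"
  by (subst cmat_eq) simp

lemma mat2_diff [simp]: "mat2 a b c d - mat2 a' b' c' d' = mat2 (a-a') (b-b') (c-c') (d-d')"
  by (subst cmat_eq) simp

lemma mat2_uminus [simp]: "- mat2 a b c d = mat2 (-a) (-b) (-c) (-d)"
  by (subst cmat_eq) simp

lemma mat2_scaleR [simp]: "r *\<^sub>R mat2 a b c d = mat2 (r*\<^sub>R a) (r*\<^sub>R b) (r*\<^sub>R c) (r*\<^sub>R d)"
  by (subst cmat_eq) simp

lemma csmul_mat2 [simp]: "csmul k (mat2 a b c d) = mat2 (k*a) (k*b) (k*c) (k*d)"
  by (subst cmat_eq) (simp add: csmul_def)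

lemma dagger_mat2 [simp]: "dagger (mat2 a b c d) = mat2 (cnj a) (cnj c) (cnj b) (cnj d)"
  by (subst cmat_eq) (simp add: dagger_def)

lemma mat1_mat2: "(mat 1 :: cmat) = mat2 1 0 0 1"
  by (subst cmat_eq) (simp add: mat_def)

lemma zero_mat2: "(0 :: cmat) = mat2 0 0 0 0"
  by (subst cmat_eq) simp

lemma det_mat2 [simp]: "det (mat2 a b c d) = a*d - b*c"
  by (simp add: det_2)

lemma mat2_chi: "mat2 a b c d = (\<chi> i j. if i = 1 then (if j = 1 then a else b) else (if j = 1 then c else d))"
  by (simp add: vec_eq_iff forall_2)

lemma tendsto_mat2:
  assumes "(f \<longlongrightarrow> a) F" "(g \<longlongrightarrow> b) F" "(h \<longlongrightarrow> c) F" "(k \<longlongrightarrow> d) F"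
  shows "((\<lambda>x. mat2 (f x) (g x) (h x) (k x)) \<longlongrightarrow> mat2 a b c d) F"
  unfolding mat2_chi
  by (intro tendsto_vec_lambda) (simp add: assms)

lemma sum_mat2: "(\<Sum>i\<in>A. mat2 (f i) (g i) (h i) (k i)) = mat2 (sum f A) (sum g A) (sum h A) (sum k A)"
  by (induction A rule: infinite_finite_induct) (simp_all add: zero_mat2)

lemma sums_mat2:
  assumes "f sums a" "g sums b" "h sums c" "k sums d"
  shows "(\<lambda>n. mat2 (f n) (g n) (h n) (k n)) sums mat2 a b c d"
  using assms unfolding sums_def sum_mat2 by (rule tendsto_mat2)

lemma mpow_diag: "mpow (mat2 a 0 0 d) n = mat2 (a^n) 0 0 (d^n)"
  by (induction n) (simp_all add: mat1_mat2)

lemma mexp_diag: "mexp (mat2 a 0 0 d) = mat2 (exp a) 0 0 (exp d)"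
proof -
  have "(\<lambda>n. (1 / fact n) *\<^sub>R mpow (mat2 a 0 0 d) n) sums mat2 (exp a) 0 0 (exp d)"
    unfolding mpow_diag mat2_scaleR
    using sums_mat2[OF exp_converges[of a] sums_zero sums_zero exp_converges[of d]]
    by (simp add: divide_inverse_commute)
  then show ?thesis unfolding mexp_def by (rule sums_unique[symmetric])
qed

lemma mmul_zero: "(A::cmat) ** 0 = 0" "0 ** (A::cmat) = 0" "csmul c (0::cmat) = 0"
  by (simp_all add: matrix_matrix_mult_def csmul_def vec_eq_iff)

definition rr :: complex where "rr = of_real (1 / sqrt 2)"
lemma cnj_rr [simp]: "cnj rr = rr" by (simp add: rr_def)
lemma rr_sq [simp]: "rr * rr = 1/2"
  unfolding rr_def of_real_mult[symmetric] by (simp add: real_divide_square_eq)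
lemma rr_sq' [simp]: "rr * (rr * z) = z/2"
  by (metis mult.assoc rr_sq times_divide_eq_left mult_1 mult.commute)
lemma rr_nz [simp]: "rr \<noteq> 0" by (simp add: rr_def)

definition Rm :: cmat where "Rm = mat2 rr rr (-rr) rr"
definition Dm :: "real \<Rightarrow> cmat" where "Dm x = mat2 (cis x) 0 0 (cis (-x))"
definition U :: "real \<Rightarrow> cmat" where "U x = Rm ** Dm x"

lemma U_mat2: "U x = mat2 (rr * cis x) (rr * cis (-x)) (-(rr * cis x)) (rr * cis (-x))"
  by (simp add: U_def Rm_def Dm_def)

lemma cis_cnj_mult [simp]: "cis x * cnj (cis x) = 1"
  by (simp add: cis_cnj cis_mult)

lemma U_SU2: "U x \<in> SU2"
  by (simp add: SU2_def U_mat2 mat1_mat2 cis_cnj cis_mult algebra_simps)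

lemma Rm_SU2: "Rm \<in> SU2"
  by (simp add: SU2_def Rm_def mat1_mat2 algebra_simps)

lemma conj_neg: "(-A) ** X ** dagger (-A) = A ** X ** dagger (A::cmat)"
  by (subst (1 2 3 4) cmat_eq[of A], subst (1 2) cmat_eq[of X]) (simp add: algebra_simps)

lemma phi_w_mat2: "phi_w v s \<beta> \<tau> = mat2 0 (of_real v * cis (-(2*(pi * s / \<beta>)*\<tau>))) (of_real v * cis (2*(pi * s / \<beta>)*\<tau>)) 0"
proof -
  have e1: "exp (complex_of_real y * \<i> * (1/2)) = cis (y/2)" for y
    by (simp add: cis_conv_exp mult_ac)
  have e2: "exp (complex_of_real y * \<i> * (-1/2)) = cis (-(y/2))" for y
    by (simp add: cis_conv_exp mult_ac)
  show ?thesis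
    unfolding phi_w_def t1_def t3_def csmul_mat2 mult_zero_right mexp_diag e1 e2 mat2_mult
    by (simp add: mat2_eq_iff algebra_simps)
qed

lemma phi_u_mat2: "phi_u v = mat2 (of_real v) 0 0 (- of_real v)"
  by (simp add: phi_u_def t3_def)

lemma U_conj_phi: "U (pi * s / \<beta>*\<tau>) ** phi_w v s \<beta> \<tau> ** dagger (U (pi * s / \<beta>*\<tau>)) = phi_u v"
  by (simp add: U_mat2 phi_w_mat2 phi_u_mat2 cis_cnj cis_mult algebra_simps)


lemma scaleR_c: "r *\<^sub>R (z::complex) = complex_of_real r * z"
  by (simp add: scaleR_conv_of_real)
lemma cis_neg': "cis (-x) = 1 / cis x"
  by (metis cis_divide cis_zero diff_0)
lemma cis_nz [simp]: "cis x \<noteq> 0"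
  by (metis cis_cnj_mult mult_zero_left zero_neq_one)

definition J :: cmat where "J = mat2 \<i> 0 0 (-\<i>)"

lemma cis_eq': "cis x = of_real (cos x) + \<i> * of_real (sin x)"
  by (simp add: complex_eq_iff)

lemma U_cs: "U x = cos x *\<^sub>R Rm + sin x *\<^sub>R (Rm ** J)"
  by (simp add: U_mat2 Rm_def J_def cis_eq' scaleR_c cos_minus sin_minus algebra_simps)

lemma cs_deriv_form: "(- sin x) *\<^sub>R (A::cmat) + cos x *\<^sub>R (A ** J) = A ** mat2 (\<i> * cis x) 0 0 (-(\<i> * cis (-x)))"
  by (subst (1 2 3) cmat_eq[of A]) (simp add: J_def cis_eq' scaleR_c cos_minus sin_minus algebra_simps)

lemma dagger_lin: "dagger (a *\<^sub>R X + b *\<^sub>R Y) = a *\<^sub>R dagger X + b *\<^sub>R dagger Y"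
  by (simp add: dagger_def vec_eq_iff)

lemma deriv_dagU:
  "((\<lambda>t. dagger (U (k*t))) has_vector_derivative
     (k *\<^sub>R dagger (Rm ** mat2 (\<i> * cis (k*t)) 0 0 (-(\<i> * cis (-(k*t))))))) (at t)"
proof -
  have "((\<lambda>t. cos (k*t) *\<^sub>R dagger Rm + sin (k*t) *\<^sub>R dagger (Rm ** J)) has_vector_derivative
     ((- (k * sin (k*t))) *\<^sub>R dagger Rm + (k * cos (k*t)) *\<^sub>R dagger (Rm ** J))) (at t)"
    by (auto intro!: derivative_eq_intros simp: mult.commute)
  moreover have "(- (k * sin (k*t))) *\<^sub>R dagger Rm + (k * cos (k*t)) *\<^sub>R dagger (Rm ** J)
     = k *\<^sub>R dagger (Rm ** mat2 (\<i> * cis (k*t)) 0 0 (-(\<i> * cis (-(k*t)))))"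
    unfolding cs_deriv_form[symmetric] dagger_lin by (simp add: algebra_simps)
  ultimately show ?thesis by (simp add: U_cs dagger_lin)
qed

lemma gauge_core:
  assumes "e \<noteq> 0"
  shows "U x ** csmul (of_real (-(2*k/e))) t3 ** dagger (U x)
    + csmul (\<i> / of_real e) (U x ** (k *\<^sub>R dagger (Rm ** mat2 (\<i>*cis x) 0 0 (-(\<i>*cis(-x)))))) = 0"
  using assms
  by (simp add: U_mat2 Rm_def t3_def zero_mat2 cis_cnj cis_neg' scaleR_c field_simps)


lemma continuous_on_mmult [continuous_intros]:
  assumes "continuous_on S f" "continuous_on S g"
  shows "continuous_on S (\<lambda>x. f x ** (g x :: cmat))"
  unfolding matrix_matrix_mult_def
  by (intro continuous_intros assms)

lemma continuous_on_dagger [continuous_intros]: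
  assumes "continuous_on S f"
  shows "continuous_on S (\<lambda>x. dagger (f x))"
  unfolding dagger_def
  by (intro continuous_intros assms)

lemma U_pi: "s \<in> {1, -1} \<Longrightarrow> U (pi * s) = - Rm"
proof -
  have "cis (-pi) = -1" by (metis cis_cnj cis_pi complex_cnj_minus complex_cnj_one)
  then show "s \<in> {1, -1} \<Longrightarrow> U (pi * s) = - Rm"
    by (auto simp: U_mat2 Rm_def)
qed

lemma U_0: "U 0 = Rm"
  by (simp add: U_mat2 Rm_def)

definition Dn :: "real \<Rightarrow> nat \<Rightarrow> real \<Rightarrow> cmat" where
  "Dn k n t = (k ^ n) *\<^sub>R (cos (k*t + n*pi/2) *\<^sub>R Rm + sin (k*t + n*pi/2) *\<^sub>R (Rm ** J))"

lemma Dn_0: "Dn k 0 t = U (k*t)"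
  by (simp add: Dn_def U_cs)

lemma Dn_deriv: "(Dn k n has_vector_derivative Dn k (Suc n) t) (at t)"
proof -
  have c: "cos (x + pi/2) = - sin x" "sin (x + pi/2) = cos x" for x
    by (simp_all add: cos_add sin_add)
  have e: "k*t + real (Suc n) * pi / 2 = (k*t + n*pi/2) + pi/2"
    by (simp add: algebra_simps add_divide_distrib)
  show ?thesis
    unfolding Dn_def e c
    by (auto intro!: derivative_eq_intros simp: algebra_simps)
qed

lemma polyakov_w:
  assumes "e > 0" "\<beta> > 0" "s \<in> {1, -1}"
  shows "polyakov e \<beta> (a_w e s \<beta> 4) = - mat 1"
proof -
  have a: "a_w e s \<beta> 4 = (\<lambda>_. csmul (of_real (- s * 2 * pi / (e * \<beta>))) t3)"
    by (simp add: a_w_def fun_eq_iff)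
  have x: "\<i> * complex_of_real e * (complex_of_real \<beta> * (complex_of_real (- s * 2 * pi / (e * \<beta>)) * (1/2)))
     = - (of_real (s * pi) * \<i>)"
    using assms by (simp add: field_simps)
  have y: "\<i> * complex_of_real e * (complex_of_real \<beta> * (complex_of_real (- s * 2 * pi / (e * \<beta>)) * (-1/2)))
     = (of_real (s * pi) * \<i>)"
    using assms by (simp add: field_simps)
  have z: "exp (of_real (s * pi) * \<i>) = -1"  "exp (- (of_real (s * pi) * \<i>)) = -1"
    using assms(3) by (auto simp: exp_minus)
  show ?thesis
    unfolding polyakov_def a integral_const_real
    using assms
    apply (simp add: t3_def scaleR_c x y z mexp_diag mat1_mat2)
    using assms(3) by (auto simp: exp_minus)
qed

lemma polyakov_u: "polyakov e \<beta> (a_u 4) = mat 1"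
proof -
  have a: "a_u 4 = (\<lambda>_. mat2 0 0 0 0)" by (simp add: a_u_def zero_mat2 fun_eq_iff)
  show ?thesis unfolding polyakov_def a integral_const_real
    by (simp add: mexp_diag mat1_mat2)
qed

theorem proposition7:
  fixes e \<beta> v s :: real
  assumes "e > 0" and "\<beta> > 0" and "v > 0" and "s \<in> {1, -1}"
  shows "\<exists>\<Omega> :: real \<Rightarrow> cmat.
      (\<forall>\<tau>\<in>{0..\<beta>}. \<Omega> \<tau> \<in> SU2)
    \<and> (\<exists>\<tau>0\<in>{0..\<beta>}.
          \<not> continuous (at \<tau>0 within {0..\<beta>}) \<Omega>
        \<and> smooth_on ({0..\<beta>} - {\<tau>0}) \<Omega>
        \<and> (\<forall>\<mu>\<in>{1..4}. \<forall>\<tau>\<in>{0..\<beta>} - {\<tau>0}.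
              gauge_a e \<beta> \<Omega> (a_w e s \<beta>) \<mu> \<tau> = a_u \<mu> \<tau>))
    \<and> \<Omega> 0 = \<Omega> \<beta>
    \<and> (\<forall>\<tau>\<in>{0..\<beta>}. \<Omega> \<tau> ** phi_w v s \<beta> \<tau> ** dagger (\<Omega> \<tau>) = phi_u v)
    \<and> (\<forall>\<delta>a :: real \<Rightarrow> cmat.
          continuous_on {0..\<beta>} \<delta>a \<and> (\<forall>\<tau>\<in>{0..\<beta>}. \<delta>a \<tau> \<in> su2) \<and> \<delta>a 0 = \<delta>a \<beta>
          \<longrightarrow> continuous_on {0..\<beta>} (\<lambda>\<tau>. \<Omega> \<tau> ** \<delta>a \<tau> ** dagger (\<Omega> \<tau>))
            \<and> \<Omega> 0 ** \<delta>a 0 ** dagger (\<Omega> 0) = \<Omega> \<beta> ** \<delta>a \<beta> ** dagger (\<Omega> \<beta>))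
    \<and> polyakov e \<beta> (a_w e s \<beta> 4) = - mat 1
    \<and> polyakov e \<beta> (a_u 4) = mat 1"
proof -
  let ?k = "pi * s / \<beta>"
  define \<Omega> where "\<Omega> = (\<lambda>\<tau>. if \<tau> = \<beta> then Rm else U (?k * \<tau>))"
  have b0: "\<beta> \<noteq> 0" using assms by simp
  have Ub: "U (?k * \<beta>) = - Rm" using U_pi[OF assms(4)] b0 by simp
  have conj: "\<Omega> \<tau> ** X ** dagger (\<Omega> \<tau>) = U (?k * \<tau>) ** X ** dagger (U (?k * \<tau>))" for \<tau> X
  proof (cases "\<tau> = \<beta>")
    case True
    then show ?thesis using conj_neg[of "U (?k * \<tau>)" X] Ub by (simp add: \<Omega>_def)
  qed (simp add: \<Omega>_def)
  have O0: "\<Omega> 0 = Rm" and Ob: "\<Omega> \<beta> = Rm"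
    using b0 by (simp_all add: \<Omega>_def U_0)
  have contU: "continuous_on UNIV (\<lambda>\<tau>. U (?k * \<tau>))"
    unfolding U_cs by (intro continuous_intros)
  have P1: "\<forall>\<tau>\<in>{0..\<beta>}. \<Omega> \<tau> \<in> SU2"
    by (simp add: \<Omega>_def U_SU2 Rm_SU2)
  have nc: "\<not> continuous (at \<beta> within {0..\<beta>}) \<Omega>"
  proof
    assume c: "continuous (at \<beta> within {0..\<beta>}) \<Omega>"
    then have l1: "(\<Omega> \<longlongrightarrow> Rm) (at \<beta> within {0..\<beta>})"
      using Ob by (simp add: continuous_within)
    have "((\<lambda>\<tau>. U (?k * \<tau>)) \<longlongrightarrow> U (?k * \<beta>)) (at \<beta> within {0..\<beta>})"
      using contU by (meson UNIV_I continuous_on_def tendsto_within_subset subset_UNIV)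
    then have "((\<lambda>\<tau>. U (?k * \<tau>)) \<longlongrightarrow> - Rm) (at \<beta> within {0..\<beta>})" using Ub by simp
    moreover have "eventually (\<lambda>\<tau>. U (?k * \<tau>) = \<Omega> \<tau>) (at \<beta> within {0..\<beta>})"
      by (simp add: eventually_at_filter \<Omega>_def)
    ultimately have l2: "(\<Omega> \<longlongrightarrow> - Rm) (at \<beta> within {0..\<beta>})"
      by (rule Lim_transform_eventually)
    have "\<not> trivial_limit (at \<beta> within {0..\<beta>})"
      using assms(2) by (simp add: trivial_limit_within)
    then have "Rm = - Rm" using tendsto_unique l1 l2 by blast
    then show False by (simp add: Rm_def mat2_eq_iff)
  qed
  have sm: "smooth_on ({0..\<beta>} - {\<beta>}) \<Omega>"
    unfolding smooth_on_def
  proof (intro exI[of _ "\<lambda>n. if n = 0 then \<Omega> else Dn ?k n"] conjI allI ballI)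
    fix n t assume t: "t \<in> {0..\<beta>} - {\<beta>}"
    show "((if n = 0 then \<Omega> else Dn ?k n) has_vector_derivative
           (if Suc n = 0 then \<Omega> else Dn ?k (Suc n)) t) (at t within {0..\<beta>} - {\<beta>})"
    proof (cases "n = 0")
      case True
      have d0: "(Dn ?k 0 has_vector_derivative Dn ?k (Suc 0) t) (at t within {0..\<beta>} - {\<beta>})"
        by (rule has_vector_derivative_at_within[OF Dn_deriv])
      have "(\<Omega> has_vector_derivative Dn ?k (Suc 0) t) (at t within {0..\<beta>} - {\<beta>})"
        by (rule has_vector_derivative_transform[OF t _ d0]) (auto simp: \<Omega>_def Dn_0)
      then show ?thesis using True by simp
    next
      case False
      then show ?thesis using has_vector_derivative_at_within[OF Dn_deriv] by simp
    qed
  qed simp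
  have ga: "\<forall>\<mu>\<in>{1..4}. \<forall>\<tau>\<in>{0..\<beta>} - {\<beta>}. gauge_a e \<beta> \<Omega> (a_w e s \<beta>) \<mu> \<tau> = a_u \<mu> \<tau>"
  proof (intro ballI)
    fix \<mu> :: nat and \<tau> assume \<tau>: "\<tau> \<in> {0..\<beta>} - {\<beta>}"
    show "gauge_a e \<beta> \<Omega> (a_w e s \<beta>) \<mu> \<tau> = a_u \<mu> \<tau>"
    proof (cases "\<mu> = 4")
      case False
      then show ?thesis
        by (simp add: gauge_a_def a_w_def dmu_def a_u_def mmul_zero)
    next
      case True
      let ?D = "?k *\<^sub>R dagger (Rm ** mat2 (\<i> * cis (?k*\<tau>)) 0 0 (-(\<i> * cis (-(?k*\<tau>)))))"
      have lt: "\<tau> < \<beta>" "0 \<le> \<tau>" using \<tau> by auto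
      have "((\<lambda>t. dagger (U (?k*t))) has_vector_derivative ?D) (at \<tau> within {0..\<beta>})"
        by (rule has_vector_derivative_at_within[OF deriv_dagU])
      then have "((\<lambda>t. dagger (\<Omega> t)) has_vector_derivative ?D) (at \<tau> within {0..\<beta>})"
        apply (rule has_vector_derivative_transform_within[where d = "\<beta> - \<tau>"])
        using lt by (auto simp: \<Omega>_def dist_real_def)
      then have vd: "dmu \<beta> \<mu> (\<lambda>t. dagger (\<Omega> t)) \<tau> = ?D"
        using True lt assms(2) by (simp add: dmu_def vector_derivative_within_closed_interval)
      have aw: "a_w e s \<beta> \<mu> \<tau> = csmul (of_real (-(2*?k/e))) t3"
        using True assms by (simp add: a_w_def field_simps)
      have Ot: "\<Omega> \<tau> = U (?k*\<tau>)" using lt by (simp add: \<Omega>_def)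
      show ?thesis
        unfolding gauge_a_def vd aw Ot using gauge_core[where e=e and k="?k" and x="?k*\<tau>"] assms(1)
        by (simp add: a_u_def)
    qed
  qed
  have P2: "\<exists>\<tau>0\<in>{0..\<beta>}.
          \<not> continuous (at \<tau>0 within {0..\<beta>}) \<Omega>
        \<and> smooth_on ({0..\<beta>} - {\<tau>0}) \<Omega>
        \<and> (\<forall>\<mu>\<in>{1..4}. \<forall>\<tau>\<in>{0..\<beta>} - {\<tau>0}.
              gauge_a e \<beta> \<Omega> (a_w e s \<beta>) \<mu> \<tau> = a_u \<mu> \<tau>)"
    using nc sm ga assms(2) by (intro bexI[of _ \<beta>]) auto
  have P4: "\<forall>\<tau>\<in>{0..\<beta>}. \<Omega> \<tau> ** phi_w v s \<beta> \<tau> ** dagger (\<Omega> \<tau>) = phi_u v"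
    unfolding conj using U_conj_phi by blast
  have P5: "\<forall>\<delta>a :: real \<Rightarrow> cmat.
          continuous_on {0..\<beta>} \<delta>a \<and> (\<forall>\<tau>\<in>{0..\<beta>}. \<delta>a \<tau> \<in> su2) \<and> \<delta>a 0 = \<delta>a \<beta>
          \<longrightarrow> continuous_on {0..\<beta>} (\<lambda>\<tau>. \<Omega> \<tau> ** \<delta>a \<tau> ** dagger (\<Omega> \<tau>))
            \<and> \<Omega> 0 ** \<delta>a 0 ** dagger (\<Omega> 0) = \<Omega> \<beta> ** \<delta>a \<beta> ** dagger (\<Omega> \<beta>)"
  proof (intro allI impI conjI)
    fix \<delta>a :: "real \<Rightarrow> cmat"
    assume h: "continuous_on {0..\<beta>} \<delta>a \<and> (\<forall>\<tau>\<in>{0..\<beta>}. \<delta>a \<tau> \<in> su2) \<and> \<delta>a 0 = \<delta>a \<beta>"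
    have cU: "continuous_on {0..\<beta>} (\<lambda>\<tau>. U (?k * \<tau>))"
      using contU continuous_on_subset by blast
    have "continuous_on {0..\<beta>} (\<lambda>\<tau>. U (?k * \<tau>) ** \<delta>a \<tau> ** dagger (U (?k * \<tau>)))"
      using h cU by (intro continuous_intros) auto
    then show "continuous_on {0..\<beta>} (\<lambda>\<tau>. \<Omega> \<tau> ** \<delta>a \<tau> ** dagger (\<Omega> \<tau>))"
      by (simp add: conj)
    show "\<Omega> 0 ** \<delta>a 0 ** dagger (\<Omega> 0) = \<Omega> \<beta> ** \<delta>a \<beta> ** dagger (\<Omega> \<beta>)"
      using h O0 Ob by simp
  qed
  show ?thesis
    apply (rule exI[of _ \<Omega>])
    using P1 P2 O0 Ob P4 P5 polyakov_w[OF assms(1,2,4)] polyakov_u by simp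
qed

end
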